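(* Let $s\in(0,1)$, $R>0$, and let $f:\mathbb R^d\to\mathbb R$ satisfy $\sup_{x,y\in[0,1]^d,x\ne y}\frac{|f(x)-f(y)|}{\|x-y\|^s}\le R$ and the periodicity condition: for every $x\in[0,1]^d$ and every $i$ with $x_i\in\{0,1\}$, $f(x)=f(x_1,\dots,x_{i-1},1-x_i,x_{i+1},\dots,x_d)$. Then its Fourier coefficients $\theta_k(f)=\int_{[0,1]^d}f(x)e^{-i2\pi\langle k,x\rangle}dx$ satisfy, for every integer $M\ge0$, $$\sum_{k\in\mathbb Z^d\setminus\{-M,\dots,M\}^d}|\theta_k(f)|^2\le C(s)\,d\,R^2(M+1)^{-2s},\qquad C(s)=\frac{2^{2s}3^{-s}}{1-2^{-2s}}.$$ *)

theory Defs
  imports "HOL-Analysis.Analysis"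
begin

definition fourier_coeff :: "(real ^ 'n \<Rightarrow> real) \<Rightarrow> int ^ 'n \<Rightarrow> complex" where
  "fourier_coeff f k =
     integral (cbox (0::real^'n) One)
       (\<lambda>x. complex_of_real (f x) * exp (- \<i> * complex_of_real (2 * pi * (\<Sum>i\<in>UNIV. of_int (k $ i) * x $ i))))"

definition C_const :: "real \<Rightarrow> real" where
  "C_const s = 2 powr (2 * s) * 3 powr (- s) / (1 - 2 powr (- 2 * s))"

end

theory Submission
  imports Defs
begin

lemma One_cart: "(One::real^'n) = 1" by (simp add: Cart_1)

lemma one_nth_real[simp]: "(1::real^'n) $ j = 1" by (simp add: one_vec_def)

lemma mem_cube: "x \<in> cbox (0::real^'n) One \<longleftrightarrow> (\<forall>j. 0 \<le> x$j \<and> x$j \<le> 1)"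
  by (simp add: One_cart mem_box_cart)

definition upd :: "real^'n \<Rightarrow> 'n \<Rightarrow> real \<Rightarrow> real^'n" where
  "upd x i v = (\<chi> j. if j = i then v else x$j)"

lemma upd_nth[simp]: "upd x i v $ j = (if j = i then v else x$j)" by (simp add: upd_def)

lemma upd_upd[simp]: "upd (upd x i v) i w = upd x i w" by (simp add: vec_eq_iff)

definition sh :: "real \<Rightarrow> 'n \<Rightarrow> real^'n \<Rightarrow> real^'n" where
  "sh t i x = upd x i (if x$i + t \<le> 1 then x$i + t else x$i + t - 1)"

lemma mem_box_lo: "0 \<le> a \<Longrightarrow> x \<in> cbox (upd 0 i a) (One::real^'n) \<longleftrightarrow> x \<in> cbox 0 One \<and> a \<le> x$i"
  unfolding mem_cube by (simp add: mem_box_cart One_cart) (smt (verit))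

lemma mem_box_hi: "a \<le> 1 \<Longrightarrow> x \<in> cbox 0 (upd (One::real^'n) i a) \<longleftrightarrow> x \<in> cbox 0 One \<and> x$i \<le> a"
  unfolding mem_cube by (simp add: mem_box_cart One_cart) (smt (verit))

lemma translate_cbox: "(\<lambda>x. x + - c) ` cbox a b = cbox (a - c) (b - (c::real^'n))"
proof -
  have "cbox (a - c) (b - c) = (\<lambda>x. (-c) + x) ` cbox a b"
    using cbox_translation[of "-c" a b] by simp
  then show ?thesis by (simp add: add.commute)
qed

lemma shift_integral:
  fixes h :: "real^'n \<Rightarrow> complex"
  assumes cont: "continuous_on (cbox 0 One) h"
    and per: "\<And>x. x \<in> cbox 0 One \<Longrightarrow> h (upd x i 0) = h (upd x i 1)"
    and t: "0 \<le> t" "t \<le> 1"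
  shows "((\<lambda>x. h (sh t i x)) has_integral integral (cbox 0 One) h) (cbox 0 One)"
proof -
  let ?Q = "cbox (0::real^'n) One"
  define e where "e = (axis i 1 :: real^'n)"
  have eB: "e \<in> Basis" by (auto simp: e_def Basis_vec_def)
  have inner_e: "\<And>x. x \<bullet> e = x $ i" by (simp add: e_def cart_eq_inner_axis)
  have e_nth: "\<And>j. e $ j = (if j = i then 1 else 0)" by (simp add: e_def axis_def)
  define B1 where "B1 = cbox (upd 0 i t) (One::real^'n)"
  define B2 where "B2 = cbox (0::real^'n) (upd One i t)"
  have sB1: "B1 \<subseteq> ?Q" using t by (auto simp: B1_def mem_box_lo)
  have sB2: "B2 \<subseteq> ?Q" using t by (auto simp: B2_def mem_box_hi)
  have B2eq: "?Q \<inter> {x. x \<bullet> e \<le> t} = B2" using t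
    by (auto simp: B2_def inner_e mem_box_hi)
  have B1eq: "?Q \<inter> {x. x \<bullet> e \<ge> t} = B1" using t
    by (auto simp: B1_def inner_e mem_box_lo)
  obtain I1 where I1: "(h has_integral I1) B1"
    using integrable_continuous[OF continuous_on_subset[OF cont sB1[unfolded B1_def]]] B1_def
    by (auto simp: integrable_on_def)
  obtain I2 where I2: "(h has_integral I2) B2"
    using integrable_continuous[OF continuous_on_subset[OF cont sB2[unfolded B2_def]]] B2_def
    by (auto simp: integrable_on_def)
  have "(h has_integral (I2 + I1)) ?Q"
    using has_integral_split[of h I2 0 One e t I1] I1 I2 B1eq B2eq eB by simp
  then have tot: "integral ?Q h = I2 + I1" by (rule integral_unique)
  define A1 where "A1 = cbox (0::real^'n) (upd One i (1-t))"
  define A2 where "A2 = cbox (upd 0 i (1 - t)) (One::real^'n)"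
  have A1eq: "?Q \<inter> {x. x \<bullet> e \<le> 1 - t} = A1" using t
    by (auto simp: A1_def inner_e mem_box_hi)
  have A2eq: "?Q \<inter> {x. x \<bullet> e \<ge> 1 - t} = A2" using t
    by (auto simp: A2_def inner_e mem_box_lo)
  have "((\<lambda>x. h (1 *\<^sub>R x + t *\<^sub>R e)) has_integral (1/(\<bar>1\<bar>^DIM(real^'n))) *\<^sub>R I1)
     ((\<lambda>x. (1/1) *\<^sub>R x + - ((1/1) *\<^sub>R (t *\<^sub>R e))) ` B1)"
    using has_integral_affinity[OF I1[unfolded B1_def], of 1 "t *\<^sub>R e"] B1_def by simp
  moreover have "(\<lambda>x. (1/1) *\<^sub>R x + - ((1/1) *\<^sub>R (t *\<^sub>R e))) ` B1 = A1"
  proof -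
    have "upd 0 i t - t *\<^sub>R e = 0" "(One::real^'n) - t *\<^sub>R e = upd One i (1-t)"
      by (auto simp: vec_eq_iff e_nth One_cart)
    then show ?thesis unfolding B1_def A1_def using translate_cbox[of "t *\<^sub>R e"] by simp
  qed
  ultimately have J1: "((\<lambda>x. h (x + t *\<^sub>R e)) has_integral I1) A1" by simp
  have "((\<lambda>x. h (1 *\<^sub>R x + (t - 1) *\<^sub>R e)) has_integral (1/(\<bar>1\<bar>^DIM(real^'n))) *\<^sub>R I2)
     ((\<lambda>x. (1/1) *\<^sub>R x + - ((1/1) *\<^sub>R ((t - 1) *\<^sub>R e))) ` B2)"
    using has_integral_affinity[OF I2[unfolded B2_def], of 1 "(t - 1) *\<^sub>R e"] B2_def by simp
  moreover have "(\<lambda>x. (1/1) *\<^sub>R x + - ((1/1) *\<^sub>R ((t - 1) *\<^sub>R e))) ` B2 = A2"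
  proof -
    have "0 - (t - 1) *\<^sub>R e = upd 0 i (1 - t)" "upd (One::real^'n) i t - (t - 1) *\<^sub>R e = One"
      by (auto simp: vec_eq_iff e_nth One_cart)
    then show ?thesis unfolding B2_def A2_def using translate_cbox[of "(t - 1) *\<^sub>R e"] by simp
  qed
  ultimately have J2: "((\<lambda>x. h (x + (t - 1) *\<^sub>R e)) has_integral I2) A2" by simp
  have K1: "((\<lambda>x. h (sh t i x)) has_integral I1) A1"
  proof (rule has_integral_eq[OF _ J1])
    fix x assume "x \<in> A1"
    then have "x $ i + t \<le> 1" using t by (auto simp: A1_def mem_box_hi)
    then have "sh t i x = x + t *\<^sub>R e" by (simp add: sh_def vec_eq_iff e_nth)
    then show "h (x + t *\<^sub>R e) = h (sh t i x)" by simp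
  qed
  have K2: "((\<lambda>x. h (sh t i x)) has_integral I2) A2"
  proof (rule has_integral_eq[OF _ J2])
    fix x assume x: "x \<in> A2"
    then have xi: "x $ i + t \<ge> 1" and xQ: "x \<in> ?Q" using t
      by (auto simp: A2_def mem_box_lo)
    show "h (x + (t - 1) *\<^sub>R e) = h (sh t i x)"
    proof (cases "x $ i + t \<le> 1")
      case True
      then have "x $ i + t = 1" using xi by simp
      then have "sh t i x = upd x i 1" "x + (t - 1) *\<^sub>R e = upd x i 0"
        by (auto simp: sh_def vec_eq_iff e_nth)
      then show ?thesis using per[OF xQ] by simp
    next
      case False
      then have "sh t i x = x + (t - 1) *\<^sub>R e" by (simp add: sh_def vec_eq_iff e_nth)
      then show ?thesis by simp
    qed
  qed
  have "((\<lambda>x. h (sh t i x)) has_integral (I1 + I2)) ?Q"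
    using has_integral_split[of "\<lambda>x. h (sh t i x)" I1 0 One e "1 - t" I2] K1 K2 A1eq A2eq eB
    by simp
  then show ?thesis using tot by (simp add: add.commute)
qed

definition phase :: "int^'n \<Rightarrow> real^'n \<Rightarrow> real" where
  "phase k x = 2 * pi * (\<Sum>i\<in>UNIV. of_int (k $ i) * x $ i)"

definition EE :: "int^'n \<Rightarrow> real^'n \<Rightarrow> complex" where
  "EE k x = exp (- \<i> * complex_of_real (phase k x))"

lemma fourier_coeff_EE: "fourier_coeff f k = integral (cbox 0 One) (\<lambda>x. of_real (f x) * EE k x)"
  by (simp add: fourier_coeff_def EE_def phase_def)

lemma continuous_EE: "continuous_on S (EE k)"
  unfolding EE_def phase_def by (intro continuous_intros)

lemma sum_upd: "(\<Sum>j\<in>UNIV. c j * upd x i v $ j) = (\<Sum>j\<in>UNIV. c j * x $ j) + c i * (v - x $ i)"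
proof -
  have "(\<Sum>j\<in>UNIV. c j * upd x i v $ j) = (\<Sum>j\<in>UNIV. c j * x $ j + (if j = i then c i * (v - x$i) else 0))"
    by (rule sum.cong) (auto simp: algebra_simps)
  also have "\<dots> = (\<Sum>j\<in>UNIV. c j * x $ j) + c i * (v - x $ i)"
    by (simp add: sum.distrib)
  finally show ?thesis .
qed

lemma phase_upd: "phase k (upd x i v) = phase k x + 2 * pi * of_int (k $ i) * (v - x $ i)"
  unfolding phase_def sum_upd[of "\<lambda>j. of_int (k $ j)"] by (simp add: algebra_simps)

lemma exp_int_shift: "exp (- \<i> * complex_of_real (a + 2 * pi * of_int m)) = exp (- \<i> * complex_of_real a)"
proof -
  have "exp (- \<i> * complex_of_real (a + 2 * pi * of_int m))
      = exp (- \<i> * complex_of_real a + \<i> * (of_int (-m) * (of_real pi * 2)))"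
    by (rule arg_cong[where f=exp]) (simp add: algebra_simps)
  also have "\<dots> = exp (- \<i> * complex_of_real a)" by (rule exp_plus_2pin)
  finally show ?thesis .
qed

lemma EE_per: "EE k (upd x i 0) = EE k (upd x i 1)"
proof -
  have "phase k (upd x i 1) = phase k (upd x i 0) + 2 * pi * of_int (k $ i)"
    by (simp add: phase_upd algebra_simps)
  then show ?thesis unfolding EE_def using exp_int_shift by simp
qed

lemma EE_sh: "EE k (sh t i x) = EE k x * exp (- \<i> * complex_of_real (2 * pi * of_int (k $ i) * t))"
proof -
  have "EE k (sh t i x) = exp (- \<i> * complex_of_real (phase k x + 2 * pi * of_int (k $ i) * t))"
  proof (cases "x $ i + t \<le> 1")
    case True
    then show ?thesis by (simp add: EE_def sh_def phase_upd)
  next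
    case False
    then have "phase k (sh t i x) = (phase k x + 2 * pi * of_int (k $ i) * t) + 2 * pi * of_int (- k $ i)"
      by (simp add: sh_def phase_upd algebra_simps)
    then show ?thesis unfolding EE_def using exp_int_shift by metis
  qed
  also have "\<dots> = EE k x * exp (- \<i> * complex_of_real (2 * pi * of_int (k $ i) * t))"
    by (simp add: EE_def algebra_simps flip: exp_add)
  finally show ?thesis .
qed

lemma EE_mult_cnj: "EE k x * cnj (EE l x) = EE (k - l) x"
proof -
  have ph: "phase (k - l) x = phase k x - phase l x"
    by (simp add: phase_def algebra_simps sum_subtractf)
  have "EE k x * cnj (EE l x) = exp (- \<i> * complex_of_real (phase k x)) * exp (\<i> * complex_of_real (phase l x))"
    by (simp add: EE_def exp_cnj)
  also have "\<dots> = exp (- \<i> * complex_of_real (phase k x) + \<i> * complex_of_real (phase l x))"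
    by (rule exp_add[symmetric])
  also have "\<dots> = EE (k - l) x"
    unfolding EE_def ph by (rule arg_cong[where f=exp]) (simp add: algebra_simps)
  finally show ?thesis .
qed

lemma integral_EE: "integral (cbox 0 One) (EE m) = (if m = 0 then 1 else (0::complex))"
proof (cases "m = 0")
  case True
  then have "EE m = (\<lambda>x. 1)" by (simp add: EE_def phase_def fun_eq_iff)
  then show ?thesis using True by simp
next
  case False
  then obtain i where mi: "m $ i \<noteq> 0" by (auto simp: vec_eq_iff)
  define r where "r = real_of_int (m $ i)"
  have r0: "r \<noteq> 0" using mi by (simp add: r_def)
  have r1: "1 \<le> \<bar>r\<bar>" using mi unfolding r_def by linarith
  define t where "t = 1 / (2 * \<bar>r\<bar>)"
  have t0: "0 \<le> t" "t \<le> 1" using r1 unfolding t_def by (auto simp: field_simps)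
  have "((\<lambda>x. EE m (sh t i x)) has_integral integral (cbox 0 One) (EE m)) (cbox 0 One)"
    by (rule shift_integral[OF continuous_EE _ t0]) (rule EE_per)
  moreover have ex: "exp (- \<i> * complex_of_real (2 * pi * r * t)) = -1"
  proof (cases "r > 0")
    case True
    then have eq: "2 * pi * r * t = pi" unfolding t_def by (simp add: field_simps)
    have "exp (- \<i> * complex_of_real (2 * pi * r * t)) = exp (- (\<i> * complex_of_real pi))"
      by (simp only: eq mult_minus_left)
    also have "\<dots> = -1" by (simp only: exp_minus exp_pi_i') simp
    finally show ?thesis .
  next
    case False
    then have eq: "2 * pi * r * t = - pi" using r0 unfolding t_def by (simp add: field_simps)
    have "exp (- \<i> * complex_of_real (2 * pi * r * t)) = exp (\<i> * complex_of_real pi)"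
      by (simp only: eq of_real_minus mult_minus_right mult_minus_left minus_minus)
    then show ?thesis by (simp only: exp_pi_i')
  qed
  moreover have shx: "EE m (sh t i x) = EE m x * (-1)" for x
  proof -
    have "EE m (sh t i x) = EE m x * exp (- \<i> * complex_of_real (2 * pi * r * t))"
      using EE_sh[of m t i x] unfolding r_def .
    then show ?thesis by (simp only: ex)
  qed
  ultimately have "((\<lambda>x. EE m (sh t i x)) has_integral integral (cbox 0 One) (EE m)) (cbox 0 One)"
    by blast
  then have "((\<lambda>x. - EE m (sh t i x)) has_integral - integral (cbox 0 One) (EE m)) (cbox 0 One)"
    by (rule has_integral_neg)
  moreover have "- EE m (sh t i x) = EE m x" for x by (simp only: shx) simp
  ultimately have "((EE m) has_integral - integral (cbox 0 One) (EE m)) (cbox 0 One)"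
    by simp
  then have "integral (cbox 0 One) (EE m) = - integral (cbox 0 One) (EE m)"
    by (rule integral_unique)
  then show ?thesis using False by simp
qed
lemma has_integral_EE_prod:
  "((\<lambda>x. EE l x * cnj (EE k x)) has_integral (if l = k then 1 else 0)) (cbox 0 One)"
proof -
  have "((EE (l - k)) has_integral integral (cbox 0 One) (EE (l - k))) (cbox 0 One)"
    by (rule integrable_integral, rule integrable_continuous, rule continuous_EE)
  then show ?thesis by (simp add: EE_mult_cnj integral_EE)
qed

lemma bessel:
  fixes g :: "real^'n \<Rightarrow> real"
  assumes cont: "continuous_on (cbox 0 One) g" and F: "finite F"
  shows "(\<Sum>k\<in>F. (cmod (integral (cbox 0 One) (\<lambda>x. of_real (g x) * EE k x)))\<^sup>2)
          \<le> integral (cbox 0 One) (\<lambda>x. (g x)\<^sup>2)"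
proof -
  let ?Q = "cbox (0::real^'n) One"
  define c where "c k = integral ?Q (\<lambda>x. of_real (g x) * EE k x)" for k
  define S where "S x = (\<Sum>k\<in>F. c k * cnj (EE k x))" for x
  define G where "G x = (complex_of_real (g x))" for x
  have cG: "continuous_on ?Q G" unfolding G_def using cont by (intro continuous_intros)
  have hc: "((\<lambda>x. G x * EE k x) has_integral c k) ?Q" for k
    unfolding c_def G_def
    by (rule integrable_integral, rule integrable_continuous,
        intro continuous_intros cont[unfolded G_def] continuous_EE)
  have hcc: "((\<lambda>x. G x * cnj (EE k x)) has_integral cnj (c k)) ?Q" for k
  proof -
    have "(cnj \<circ> (\<lambda>x. G x * EE k x) has_integral cnj (c k)) ?Q"
      using hc[of k] has_integral_cnj by blast
    then show ?thesis by (simp add: o_def G_def)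
  qed
  have T1: "((\<lambda>x. of_real ((g x)\<^sup>2) :: complex) has_integral of_real (integral ?Q (\<lambda>x. (g x)\<^sup>2))) ?Q"
    by (rule has_integral_of_real, rule integrable_integral, rule integrable_continuous,
        intro continuous_intros cont)
  have T2: "((\<lambda>x. G x * cnj (S x)) has_integral (\<Sum>k\<in>F. cnj (c k) * c k)) ?Q"
  proof -
    have "((\<lambda>x. \<Sum>k\<in>F. cnj (c k) * (G x * EE k x)) has_integral (\<Sum>k\<in>F. cnj (c k) * c k)) ?Q"
      by (rule has_integral_sum[OF F], rule has_integral_mult_right, rule hc)
    moreover have "(\<Sum>k\<in>F. cnj (c k) * (G x * EE k x)) = G x * cnj (S x)" for x
      by (simp add: S_def sum_distrib_left algebra_simps)
    ultimately show ?thesis by simp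
  qed
  have T3: "((\<lambda>x. S x * G x) has_integral (\<Sum>k\<in>F. c k * cnj (c k))) ?Q"
  proof -
    have "((\<lambda>x. \<Sum>k\<in>F. c k * (G x * cnj (EE k x))) has_integral (\<Sum>k\<in>F. c k * cnj (c k))) ?Q"
      by (rule has_integral_sum[OF F], rule has_integral_mult_right, rule hcc)
    moreover have "(\<Sum>k\<in>F. c k * (G x * cnj (EE k x))) = S x * G x" for x
      unfolding S_def sum_distrib_right by (rule sum.cong) (simp_all add: algebra_simps)
    ultimately show ?thesis by simp
  qed
  have T4: "((\<lambda>x. S x * cnj (S x)) has_integral (\<Sum>k\<in>F. c k * cnj (c k))) ?Q"
  proof -
    have "((\<lambda>x. \<Sum>k\<in>F. \<Sum>l\<in>F. (c k * cnj (c l)) * (EE l x * cnj (EE k x))) has_integral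
          (\<Sum>k\<in>F. \<Sum>l\<in>F. (c k * cnj (c l)) * (if l = k then 1 else 0))) ?Q"
      by (intro has_integral_sum[OF F] has_integral_mult_right has_integral_EE_prod)
    moreover have "(\<Sum>k\<in>F. \<Sum>l\<in>F. (c k * cnj (c l)) * (if l = k then 1 else 0)) = (\<Sum>k\<in>F. c k * cnj (c k))"
      using F by (simp add: if_distrib cong: if_cong)
    moreover have "(\<Sum>k\<in>F. \<Sum>l\<in>F. (c k * cnj (c l)) * (EE l x * cnj (EE k x))) = S x * cnj (S x)" for x
      by (simp add: S_def sum_product algebra_simps)
    ultimately show ?thesis by simp
  qed
  define X where "X = (\<Sum>k\<in>F. c k * cnj (c k))"
  have X: "X = of_real (\<Sum>k\<in>F. (cmod (c k))\<^sup>2)"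
    unfolding X_def of_real_sum by (rule sum.cong) (simp_all only: complex_norm_square)
  have "((\<lambda>x. (of_real ((g x)\<^sup>2) :: complex) - G x * cnj (S x) - S x * G x + S x * cnj (S x)) has_integral
        (of_real (integral ?Q (\<lambda>x. (g x)\<^sup>2)) - X - X + X)) ?Q"
    unfolding X_def
    by (intro has_integral_add has_integral_diff T1 T4)
       (use T2 in \<open>simp add: mult.commute\<close>, rule T3)
  moreover have "of_real ((g x)\<^sup>2) - G x * cnj (S x) - S x * G x + S x * cnj (S x)
      = of_real ((cmod (G x - S x))\<^sup>2)" for x
  proof -
    have "of_real ((g x)\<^sup>2) - G x * cnj (S x) - S x * G x + S x * cnj (S x)
        = (G x - S x) * (G x - cnj (S x))"
      by (simp add: G_def algebra_simps power2_eq_square)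
    also have "\<dots> = of_real ((cmod (G x - S x))\<^sup>2)"
      by (subst complex_norm_square) (simp add: G_def)
    finally show ?thesis .
  qed
  ultimately have "((\<lambda>x. (of_real ((cmod (G x - S x))\<^sup>2) :: complex)) has_integral
        of_real (integral ?Q (\<lambda>x. (g x)\<^sup>2) - (\<Sum>k\<in>F. (cmod (c k))\<^sup>2))) ?Q"
    by (simp add: X)
  from has_integral_Re[OF this] 
  have "((\<lambda>x. (cmod (G x - S x))\<^sup>2) has_integral
        (integral ?Q (\<lambda>x. (g x)\<^sup>2) - (\<Sum>k\<in>F. (cmod (c k))\<^sup>2))) ?Q" by simp
  then have "0 \<le> integral ?Q (\<lambda>x. (g x)\<^sup>2) - (\<Sum>k\<in>F. (cmod (c k))\<^sup>2)"
    by (rule has_integral_nonneg) simp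
  then show ?thesis by (simp add: c_def)
qed
lemma split_Q:
  assumes a: "0 \<le> a" "a \<le> 1"
    and I: "(\<phi> has_integral I) (cbox 0 (upd (One::real^'n) i a))"
    and J: "(\<phi> has_integral J) (cbox (upd 0 i a) (One::real^'n))"
  shows "(\<phi> has_integral (I + J)) (cbox 0 (One::real^'n))"
proof -
  define e where "e = (axis i 1 :: real^'n)"
  have eB: "e \<in> Basis" by (auto simp: e_def Basis_vec_def)
  have inner_e: "\<And>x. x \<bullet> e = x $ i" by (simp add: e_def cart_eq_inner_axis)
  have A1eq: "cbox 0 One \<inter> {x. x \<bullet> e \<le> a} = cbox 0 (upd (One::real^'n) i a)" using a
    by (auto simp: inner_e mem_box_hi)
  have A2eq: "cbox 0 One \<inter> {x. x \<bullet> e \<ge> a} = cbox (upd 0 i a) (One::real^'n)" using a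
    by (auto simp: inner_e mem_box_lo)
  show ?thesis using has_integral_split[of \<phi> I 0 One e a J] I J A1eq A2eq eB by simp
qed

lemma content_hi: "0 \<le> a \<Longrightarrow> Henstock_Kurzweil_Integration.content (cbox 0 (upd (One::real^'n) i a)) = a"
proof -
  assume a: "0 \<le> a"
  have "0 \<in> cbox 0 (upd (One::real^'n) i a)"
    using a by (simp add: mem_box_cart One_cart)
  then have "cbox 0 (upd (One::real^'n) i a) \<noteq> {}" by blast
  then have "Henstock_Kurzweil_Integration.content (cbox 0 (upd (One::real^'n) i a)) = (\<Prod>j\<in>UNIV. if j = i then a else 1)"
    by (simp add: content_cbox_cart One_cart cong: if_cong)
  then show ?thesis by simp
qed

lemma content_lo: "a \<le> 1 \<Longrightarrow> Henstock_Kurzweil_Integration.content (cbox (upd 0 i a) (One::real^'n)) = 1 - a"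
proof -
  assume a: "a \<le> 1"
  have "One \<in> cbox (upd 0 i a) (One::real^'n)"
    using a by (simp add: mem_box_cart One_cart)
  then have "cbox (upd 0 i a) (One::real^'n) \<noteq> {}" by blast
  then have "Henstock_Kurzweil_Integration.content (cbox (upd 0 i a) (One::real^'n)) = (\<Prod>j\<in>UNIV. if j = i then 1 - a else 1)"
    by (simp add: content_cbox_cart One_cart if_distrib cong: if_cong)
  then show ?thesis by simp
qed

lemma upd_diff: "upd x i a - upd x i b = (a - b) *\<^sub>R (axis i 1 :: real^'n)"
  by (simp add: vec_eq_iff axis_def)

lemma norm_upd_diff: "norm (upd x i a - upd (x::real^'n) i b) = \<bar>a - b\<bar>"
  by (simp add: upd_diff)

lemma upd_self: "upd x i (x $ i) = x"
  by (simp add: vec_eq_iff)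

lemma cos_le_half:
  fixes k :: int and N :: nat
  assumes "1 \<le> N" "int N \<le> \<bar>k\<bar>" "\<bar>k\<bar> < 2 * int N"
  shows "cos (2 * pi * of_int k * (1 / (3 * real N))) \<le> - 1/2"
proof -
  define a where "a = \<bar>2 * pi * of_int k * (1 / (3 * real N))\<bar>"
  have a_eq: "a = 2 * pi * \<bar>of_int k\<bar> / (3 * real N)" unfolding a_def using assms
    by (simp add: abs_mult)
  have k1: "real N \<le> \<bar>of_int k\<bar>" "\<bar>of_int k\<bar> \<le> 2 * real N"
    using assms by linarith+
  have Npos: "0 < real N" using assms by simp
  have lo: "2 * pi / 3 \<le> a" unfolding a_eq using k1 Npos pi_gt_zero
    by (simp add: field_simps)
  have hi: "a \<le> 4 * pi / 3" unfolding a_eq using k1 Npos pi_gt_zero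
    by (simp add: field_simps)
  have "cos (a - pi) \<ge> 1/2"
  proof -
    have ab: "\<bar>a - pi\<bar> \<le> pi/3" using lo hi unfolding abs_le_iff by linarith
    have "cos (pi/3) \<le> cos \<bar>a - pi\<bar>"
      by (rule cos_monotone_0_pi_le) (use ab in auto)
    then show ?thesis by (simp add: cos_60)
  qed
  then have "cos a \<le> -1/2" by simp
  then show ?thesis unfolding a_def cos_abs_real .
qed

lemma cmod_exp_minus1: "(cmod (exp (\<i> * complex_of_real a) - 1))\<^sup>2 = 2 - 2 * cos a"
proof -
  have "(cmod (exp (\<i> * complex_of_real a) - 1))\<^sup>2 = (cos a - 1)\<^sup>2 + (sin a)\<^sup>2"
    by (simp add: cmod_power2 Re_exp Im_exp)
  also have "\<dots> = 2 - 2 * cos a"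
    using sin_cos_squared_add[of a] by (simp add: power2_eq_square algebra_simps)
  finally show ?thesis .
qed

lemma upd_in_Q: "x \<in> cbox 0 One \<Longrightarrow> 0 \<le> v \<Longrightarrow> v \<le> 1 \<Longrightarrow> upd x i v \<in> cbox (0::real^'n) One"
  by (simp add: mem_cube)
context
  fixes f :: "real^'n \<Rightarrow> real" and R s :: real
  assumes s0: "0 < s" and R0: "0 < R"
    and holdR: "\<And>x y. x \<in> cbox 0 One \<Longrightarrow> y \<in> cbox 0 One \<Longrightarrow> \<bar>f x - f y\<bar> \<le> R * norm (x - y) powr s"
    and perF: "\<And>x i. x \<in> cbox 0 One \<Longrightarrow> f (upd x i 0) = f (upd x i 1)"
begin

lemma contF: "continuous_on (cbox 0 One) f"
proof -
  have "\<forall>x\<in>cbox (0::real^'n) One. \<forall>e>0. \<exists>d>0. \<forall>y\<in>cbox (0::real^'n) One. dist y x < d \<longrightarrow> dist (f y) (f x) < e"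
  proof (intro ballI allI impI)
    fix x :: "real^'n" and e :: real assume x: "x \<in> cbox 0 One" and e: "0 < e"
    define d where "d = (e / R) powr (1 / s)"
    have d: "0 < d" using e R0 by (simp add: d_def)
    have "\<forall>y\<in>cbox (0::real^'n) One. dist y x < d \<longrightarrow> dist (f y) (f x) < e"
    proof (intro ballI impI)
      fix y :: "real^'n" assume y: "y \<in> cbox 0 One" and dy: "dist y x < d"
      have "norm (y - x) powr s < d powr s" using dy s0 by (intro powr_less_mono2) (auto simp: dist_norm)
      also have "d powr s = e / R" using e R0 s0 by (simp add: d_def powr_powr)
      finally have "R * norm (y - x) powr s < e" using R0 by (simp add: field_simps)
      then show "dist (f y) (f x) < e" using holdR[OF y x] by (simp add: dist_real_def)
    qed
    then show "\<exists>d>0. \<forall>y\<in>cbox (0::real^'n) One. dist y x < d \<longrightarrow> dist (f y) (f x) < e"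
      using d by blast
  qed
  then show ?thesis unfolding continuous_on_iff by blast
qed

lemma cube_split: "0 \<le> t \<Longrightarrow> t \<le> 1 \<Longrightarrow>
   cbox 0 (One::real^'n) = cbox 0 (upd One i (1-t)) \<union> cbox (upd 0 i (1-t)) One"
  by (auto simp: mem_box_hi mem_box_lo)

lemma sh_A1: "x $ i + t \<le> 1 \<Longrightarrow> sh t i x = x + t *\<^sub>R axis i 1"
  by (simp add: sh_def vec_eq_iff axis_def)

lemma sh_A2: "x $ i + t > 1 \<Longrightarrow> sh t i x = x + (t - 1) *\<^sub>R axis i 1"
  by (simp add: sh_def vec_eq_iff axis_def)

lemma f_sh_A2: "x \<in> cbox 0 One \<Longrightarrow> x $ i + t \<ge> 1 \<Longrightarrow> f (sh t i x) = f (x + (t - 1) *\<^sub>R axis i 1)"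
proof -
  assume xQ: "x \<in> cbox 0 One" and xi: "x $ i + t \<ge> 1"
  show ?thesis
  proof (cases "x $ i + t \<le> 1")
    case True
    then have "x $ i + t = 1" using xi by simp
    then have "sh t i x = upd x i 1" "x + (t - 1) *\<^sub>R axis i 1 = upd x i 0"
      by (auto simp: sh_def vec_eq_iff axis_def)
    then show ?thesis using perF[OF xQ] by simp
  next
    case False
    then show ?thesis by (simp add: sh_A2)
  qed
qed

lemma cont_sh: "0 \<le> t \<Longrightarrow> t \<le> 1 \<Longrightarrow> continuous_on (cbox 0 One) (\<lambda>x. f (sh t i x))"
proof -
  assume t: "0 \<le> t" "t \<le> 1"
  let ?A1 = "cbox 0 (upd (One::real^'n) i (1-t))"
  let ?A2 = "cbox (upd 0 i (1-t)) (One::real^'n)"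
  have c1: "continuous_on ?A1 (\<lambda>x. f (sh t i x))"
  proof -
    have "continuous_on ?A1 (\<lambda>x. f (x + t *\<^sub>R axis i 1))"
    proof (rule continuous_on_compose2[OF contF])
      show "continuous_on ?A1 (\<lambda>x. x + t *\<^sub>R axis i 1)" by (intro continuous_intros)
      show "(\<lambda>x. x + t *\<^sub>R axis i 1) ` ?A1 \<subseteq> cbox 0 One"
        using t by (auto simp: mem_box_hi mem_cube axis_def)
    qed
    then show ?thesis
      by (rule continuous_on_eq) (use t in \<open>auto simp: mem_box_hi sh_A1\<close>)
  qed
  have c2: "continuous_on ?A2 (\<lambda>x. f (sh t i x))"
  proof -
    have "continuous_on ?A2 (\<lambda>x. f (x + (t - 1) *\<^sub>R axis i 1))"
    proof (rule continuous_on_compose2[OF contF])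
      show "continuous_on ?A2 (\<lambda>x. x + (t - 1) *\<^sub>R axis i 1)" by (intro continuous_intros)
      show "(\<lambda>x. x + (t - 1) *\<^sub>R axis i 1) ` ?A2 \<subseteq> cbox 0 One"
        using t by (auto simp: mem_box_lo mem_cube axis_def) (smt (verit))+
    qed
    then show ?thesis
      by (rule continuous_on_eq) (use t in \<open>auto simp: mem_box_lo f_sh_A2\<close>)
  qed
  show ?thesis
    using continuous_on_closed_Un[OF closed_cbox closed_cbox c1 c2] cube_split[OF t] by simp
qed



lemma coeff_sh:
  assumes t: "0 \<le> t" "t \<le> 1"
  shows "integral (cbox 0 One) (\<lambda>x. of_real (f (sh t i x)) * EE k x)
       = exp (\<i> * complex_of_real (2 * pi * of_int (k $ i) * t)) * fourier_coeff f k"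
proof -
  define h where "h x = complex_of_real (f x) * EE k x" for x
  define w where "w = exp (- \<i> * complex_of_real (2 * pi * of_int (k $ i) * t))"
  define u where "u = exp (\<i> * complex_of_real (2 * pi * of_int (k $ i) * t))"
  have uw: "u * w = 1" unfolding u_def w_def by (simp flip: exp_add)
  have ch: "continuous_on (cbox 0 One) h" unfolding h_def
    by (intro continuous_intros contF continuous_EE)
  have ph: "h (upd x i 0) = h (upd x i 1)" if "x \<in> cbox 0 One" for x
    unfolding h_def using perF[OF that, of i] EE_per[of k x i] by simp
  have "((\<lambda>x. h (sh t i x)) has_integral fourier_coeff f k) (cbox 0 One)"
    using shift_integral[OF ch ph t] by (simp add: fourier_coeff_EE h_def)
  then have "((\<lambda>x. u * h (sh t i x)) has_integral u * fourier_coeff f k) (cbox 0 One)"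
    by (rule has_integral_mult_right)
  moreover have "u * h (sh t i x) = of_real (f (sh t i x)) * EE k x" for x
  proof -
    have "u * h (sh t i x) = of_real (f (sh t i x)) * EE k x * (u * w)"
      unfolding h_def EE_sh w_def by (simp add: algebra_simps)
    then show ?thesis using uw by simp
  qed
  ultimately have "((\<lambda>x. of_real (f (sh t i x)) * EE k x) has_integral u * fourier_coeff f k) (cbox 0 One)"
    by simp
  then show ?thesis unfolding u_def by (rule integral_unique)
qed

lemma g_bound1:
  assumes x: "x \<in> cbox 0 One" and t: "0 < t" "t \<le> 1" and xi: "x $ i + t \<le> 1"
  shows "\<bar>f (sh t i x) - f x\<bar> \<le> R * t powr s"
proof -
  have sh: "sh t i x = upd x i (x $ i + t)" using xi by (simp add: sh_def)
  have "0 \<le> x $ i" using x by (simp add: mem_cube)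
  then have inQ: "sh t i x \<in> cbox 0 One" unfolding sh using x xi t by (intro upd_in_Q) auto
  have "norm (sh t i x - x) = t"
    unfolding sh using norm_upd_diff[of x i "x $ i + t" "x $ i", unfolded upd_self] t by simp
  then show ?thesis using holdR[OF inQ x] by simp
qed

lemma g_bound2:
  assumes x: "x \<in> cbox 0 One" and t: "0 < t" "t \<le> 1"
  shows "\<bar>f (sh t i x) - f x\<bar> \<le> 2 * R * t powr s"
proof (cases "x $ i + t \<le> 1")
  case True
  have "R * t powr s \<le> 2 * R * t powr s" using R0 by simp
  then show ?thesis using g_bound1[OF x t True] by linarith
next
  case False
  have xi: "0 \<le> x $ i" "x $ i \<le> 1" using x by (auto simp: mem_cube)
  have sh: "sh t i x = upd x i (x $ i + t - 1)" using False by (simp add: sh_def)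
  have inQ: "sh t i x \<in> cbox 0 One" unfolding sh using x xi t False by (intro upd_in_Q) auto
  have in0: "upd x i 0 \<in> cbox 0 One" and in1: "upd x i 1 \<in> cbox 0 One"
    using x by (auto intro: upd_in_Q)
  have "\<bar>f (sh t i x) - f (upd x i 0)\<bar> \<le> R * norm (sh t i x - upd x i 0) powr s"
    by (rule holdR[OF inQ in0])
  also have "norm (sh t i x - upd x i 0) = x $ i + t - 1"
    unfolding sh norm_upd_diff using False by simp
  also have "R * (x $ i + t - 1) powr s \<le> R * t powr s"
    using R0 s0 xi False by (intro mult_left_mono powr_mono2) auto
  finally have b1: "\<bar>f (sh t i x) - f (upd x i 0)\<bar> \<le> R * t powr s" .
  have "\<bar>f (upd x i 1) - f x\<bar> \<le> R * norm (upd x i 1 - x) powr s"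
    by (rule holdR[OF in1 x])
  also have "norm (upd x i 1 - x) = 1 - x $ i"
    using norm_upd_diff[of x i 1 "x $ i", unfolded upd_self] xi by simp
  also have "R * (1 - x $ i) powr s \<le> R * t powr s"
    using R0 s0 xi False by (intro mult_left_mono powr_mono2) auto
  finally have b2: "\<bar>f (upd x i 1) - f x\<bar> \<le> R * t powr s" .
  have "f (upd x i 0) = f (upd x i 1)" by (rule perF[OF x])
  then show ?thesis using b1 b2 by linarith
qed

lemma gsq_int:
  assumes t: "0 < t" "t \<le> 1"
  shows "integral (cbox 0 One) (\<lambda>x. (f (sh t i x) - f x)\<^sup>2) \<le> R\<^sup>2 * t powr (2 * s) * (1 + 3 * t)"
proof -
  define \<phi> where "\<phi> = (\<lambda>x. (f (sh t i x) - f x)\<^sup>2)"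
  let ?A1 = "cbox 0 (upd (One::real^'n) i (1-t))"
  let ?A2 = "cbox (upd 0 i (1-t)) (One::real^'n)"
  have cphi: "continuous_on (cbox 0 One) \<phi>" unfolding \<phi>_def
    using t by (intro continuous_intros cont_sh contF) auto
  have s1: "?A1 \<subseteq> cbox 0 One" and s2: "?A2 \<subseteq> cbox 0 One"
    using cube_split[of t i] t by auto
  obtain J1 where J1: "(\<phi> has_integral J1) ?A1"
    using integrable_continuous[OF continuous_on_subset[OF cphi s1]] by (auto simp: integrable_on_def)
  obtain J2 where J2: "(\<phi> has_integral J2) ?A2"
    using integrable_continuous[OF continuous_on_subset[OF cphi s2]] by (auto simp: integrable_on_def)
  have "(\<phi> has_integral (J1 + J2)) (cbox 0 One)"
    by (rule split_Q[OF _ _ J1 J2]) (use t in auto)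
  then have tot: "integral (cbox 0 One) \<phi> = J1 + J2" by (rule integral_unique)
  define B where "B = R * t powr s"
  have B0: "0 \<le> B" using R0 by (simp add: B_def)
  have "J1 \<le> Henstock_Kurzweil_Integration.content ?A1 *\<^sub>R B\<^sup>2"
  proof (rule has_integral_le[OF J1 has_integral_const])
    fix x assume x: "x \<in> ?A1"
    then have xQ: "x \<in> cbox 0 One" and xi: "x $ i + t \<le> 1" using t by (auto simp: mem_box_hi)
    have "\<bar>f (sh t i x) - f x\<bar> \<le> B" unfolding B_def by (rule g_bound1[OF xQ t xi])
    then show "\<phi> x \<le> B\<^sup>2" unfolding \<phi>_def using B0 by (simp add: abs_le_square_iff[symmetric])
  qed
  also have "Henstock_Kurzweil_Integration.content ?A1 = 1 - t" using t by (simp add: content_hi)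
  finally have j1: "J1 \<le> (1 - t) * B\<^sup>2" by simp
  have "J2 \<le> Henstock_Kurzweil_Integration.content ?A2 *\<^sub>R (2 * B)\<^sup>2"
  proof (rule has_integral_le[OF J2 has_integral_const])
    fix x assume x: "x \<in> ?A2"
    then have xQ: "x \<in> cbox 0 One" using s2 by auto
    have "\<bar>f (sh t i x) - f x\<bar> \<le> 2 * B" unfolding B_def using g_bound2[of x t i, OF xQ t] by (simp add: mult.assoc)
    then have "\<bar>f (sh t i x) - f x\<bar>\<^sup>2 \<le> (2 * B)\<^sup>2" by (rule power_mono) simp
    then show "\<phi> x \<le> (2 * B)\<^sup>2" unfolding \<phi>_def by (simp only: power2_abs)
  qed
  also have "Henstock_Kurzweil_Integration.content ?A2 = t" using t by (simp add: content_lo)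
  finally have j2: "J2 \<le> t * (2 * B)\<^sup>2" by simp
  have B2: "B\<^sup>2 = R\<^sup>2 * t powr (2 * s)"
  proof -
    have "t powr (2 * s) = t powr (s + s)" by (simp only: mult_2)
    also have "\<dots> = t powr s * t powr s" by (rule powr_add)
    finally have "t powr (2 * s) = t powr s * t powr s" .
    then show ?thesis unfolding B_def by (simp add: power2_eq_square)
  qed
  have e: "(1 - t) * B\<^sup>2 + t * (2 * B)\<^sup>2 = B\<^sup>2 * (1 + 3 * t)"
    by (simp add: power2_eq_square algebra_simps)
  have "integral (cbox 0 One) \<phi> \<le> B\<^sup>2 * (1 + 3 * t)" using tot j1 j2 e by linarith
  then show ?thesis unfolding \<phi>_def B2 .
qed


lemma block:
  fixes N :: nat
  assumes N: "1 \<le> N" and G: "finite G"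
    and Gk: "\<And>k. k \<in> G \<Longrightarrow> int N \<le> \<bar>k $ i\<bar> \<and> \<bar>k $ i\<bar> < 2 * int N"
  shows "(\<Sum>k\<in>G. (cmod (fourier_coeff f k))\<^sup>2) \<le> 2/3 * R\<^sup>2 * (1 / (3 * real N)) powr (2 * s)"
proof -
  define t where "t = 1 / (3 * real N)"
  have t: "0 < t" "t \<le> 1" "t \<le> 1/3" using N by (auto simp: t_def field_simps)
  define g where "g x = f (sh t i x) - f x" for x
  have cg: "continuous_on (cbox 0 One) g" unfolding g_def
    using t by (intro continuous_intros cont_sh contF) auto
  have coef: "integral (cbox 0 One) (\<lambda>x. of_real (g x) * EE k x)
      = (exp (\<i> * complex_of_real (2 * pi * of_int (k $ i) * t)) - 1) * fourier_coeff f k" for k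
  proof -
    have i1: "(\<lambda>x. of_real (f (sh t i x)) * EE k x) integrable_on cbox 0 One"
      using t by (intro integrable_continuous continuous_intros cont_sh continuous_EE) auto
    have i2: "(\<lambda>x. of_real (f x) * EE k x) integrable_on cbox 0 One"
      by (intro integrable_continuous continuous_intros contF continuous_EE)
    have "integral (cbox 0 One) (\<lambda>x. of_real (g x) * EE k x)
        = integral (cbox 0 One) (\<lambda>x. of_real (f (sh t i x)) * EE k x - of_real (f x) * EE k x)"
      by (simp add: g_def left_diff_distrib)
    also have "\<dots> = integral (cbox 0 One) (\<lambda>x. of_real (f (sh t i x)) * EE k x)
                     - integral (cbox 0 One) (\<lambda>x. of_real (f x) * EE k x)"
      by (rule integral_diff[OF i1 i2])
    also have "\<dots> = (exp (\<i> * complex_of_real (2 * pi * of_int (k $ i) * t)) - 1) * fourier_coeff f k"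
    proof -
      have t0: "0 \<le> t" "t \<le> 1" using t by auto
      show ?thesis unfolding coeff_sh[OF t0] fourier_coeff_EE[symmetric] by (simp add: left_diff_distrib)
    qed
    finally show ?thesis .
  qed
  have key: "3 * (cmod (fourier_coeff f k))\<^sup>2 \<le> (cmod (integral (cbox 0 One) (\<lambda>x. of_real (g x) * EE k x)))\<^sup>2"
    if "k \<in> G" for k
  proof -
    have c: "cos (2 * pi * of_int (k $ i) * t) \<le> -1/2"
      unfolding t_def using cos_le_half N Gk[OF that] by blast
    have "(cmod (integral (cbox 0 One) (\<lambda>x. of_real (g x) * EE k x)))\<^sup>2
        = (cmod (exp (\<i> * complex_of_real (2 * pi * of_int (k $ i) * t)) - 1))\<^sup>2 * (cmod (fourier_coeff f k))\<^sup>2"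
      by (simp only: coef norm_mult power_mult_distrib)
    also have "\<dots> = (2 - 2 * cos (2 * pi * of_int (k $ i) * t)) * (cmod (fourier_coeff f k))\<^sup>2"
      by (simp only: cmod_exp_minus1)
    finally have eq: "(cmod (integral (cbox 0 One) (\<lambda>x. of_real (g x) * EE k x)))\<^sup>2
        = (2 - 2 * cos (2 * pi * of_int (k $ i) * t)) * (cmod (fourier_coeff f k))\<^sup>2" .
    have "3 * (cmod (fourier_coeff f k))\<^sup>2 \<le> (2 - 2 * cos (2 * pi * of_int (k $ i) * t)) * (cmod (fourier_coeff f k))\<^sup>2"
      by (rule mult_right_mono) (use c in auto)
    then show ?thesis unfolding eq .
  qed
  have "3 * (\<Sum>k\<in>G. (cmod (fourier_coeff f k))\<^sup>2)
      \<le> (\<Sum>k\<in>G. (cmod (integral (cbox 0 One) (\<lambda>x. of_real (g x) * EE k x)))\<^sup>2)"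
    unfolding sum_distrib_left by (rule sum_mono) (rule key)
  also have "\<dots> \<le> integral (cbox 0 One) (\<lambda>x. (g x)\<^sup>2)"
    by (rule bessel[OF cg G])
  also have "\<dots> \<le> R\<^sup>2 * t powr (2 * s) * (1 + 3 * t)"
    unfolding g_def using gsq_int[of t i] t by simp
  also have "\<dots> \<le> R\<^sup>2 * t powr (2 * s) * 2"
    using t by (intro mult_left_mono) auto
  finally show ?thesis unfolding t_def by simp
qed

end
lemma two_pow_powr: "((2::real)^j) powr a = (2 powr a)^j"
proof -
  have "(2::real)^j = 2 powr (real j)" by (simp add: powr_realpow)
  then have "((2::real)^j) powr a = 2 powr (real j * a)" by (simp add: powr_powr)
  also have "\<dots> = (2 powr a) powr (real j)" by (simp add: powr_powr mult.commute)
  also have "\<dots> = (2 powr a)^j" by (simp add: powr_realpow)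
  finally show ?thesis .
qed

lemma blk_val: "(1 / (3 * real (2^j * (M+1)))) powr (2 * s)
   = 3 powr (- 2 * s) * (real M + 1) powr (- 2 * s) * (2 powr (- 2 * s))^j"
proof -
  have "0 < (2::nat)^j * (M+1)" by simp
  then have "0 < real (2^j * (M+1))" by (simp only: of_nat_0_less_iff)
  then have pos: "0 < 3 * real (2^j * (M+1))" by simp
  have "(1 / (3 * real (2^j * (M+1)))) powr (2 * s) = (3 * real (2^j * (M+1))) powr (- 2 * s)"
    using pos by (simp add: powr_divide powr_minus_divide)
  also have "\<dots> = 3 powr (- 2 * s) * ((2::real)^j) powr (- 2 * s) * (real M + 1) powr (- 2 * s)"
  proof -
    have e: "3 * real (2^j * (M+1)) = 3 * (2::real)^j * (real M + 1)" by (simp add: algebra_simps)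
    show ?thesis unfolding e powr_mult ..
  qed
  also have "\<dots> = 3 powr (- 2 * s) * (real M + 1) powr (- 2 * s) * (2 powr (- 2 * s))^j"
    by (simp add: two_pow_powr)
  finally show ?thesis .
qed

lemma exists_block:
  fixes m M :: nat
  shows "M + 1 \<le> m \<Longrightarrow> m < 2^J * (M+1) \<Longrightarrow> \<exists>j<J. 2^j*(M+1) \<le> m \<and> m < 2 * (2^j*(M+1))"
proof (induction J)
  case 0 then show ?case by simp
next
  case (Suc J)
  show ?case
  proof (cases "m < 2^J * (M+1)")
    case True
    then obtain j where "j < J" "2^j*(M+1) \<le> m \<and> m < 2 * (2^j*(M+1))" using Suc by blast
    then show ?thesis by (intro exI[of _ j]) auto
  next
    case False
    then show ?thesis using Suc.prems by (intro exI[of _ J]) auto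
  qed
qed

lemma coord_sum_bound:
  fixes \<theta> :: "int^'n \<Rightarrow> real" and i :: 'n
  assumes nonneg: "\<And>k. 0 \<le> \<theta> k" and s: "0 < s" and c: "0 \<le> c"
    and blk: "\<And>N G. 1 \<le> N \<Longrightarrow> finite G \<Longrightarrow> (\<And>k. k \<in> G \<Longrightarrow> int N \<le> \<bar>k $ i\<bar> \<and> \<bar>k $ i\<bar> < 2 * int N)
              \<Longrightarrow> sum \<theta> G \<le> c * (1 / (3 * real N)) powr (2 * s)"
    and H: "finite H" "\<And>k. k \<in> H \<Longrightarrow> int M < \<bar>k $ i\<bar>"
  shows "sum \<theta> H \<le> c * 3 powr (- 2 * s) * (real M + 1) powr (- 2 * s) / (1 - 2 powr (- 2 * s))"
proof -
  define q where "q = (2::real) powr (- 2 * s)"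
  have q: "0 < q" "q < 1" using s by (auto simp: q_def powr_less_one)
  define J where "J = Suc (Max (insert 0 ((\<lambda>k. nat \<bar>k $ i\<bar>) ` H)))"
  have Jb: "nat \<bar>k $ i\<bar> < 2^J * (M+1)" if "k \<in> H" for k
  proof -
    have "nat \<bar>k $ i\<bar> \<le> Max (insert 0 ((\<lambda>k. nat \<bar>k $ i\<bar>) ` H))"
      using H(1) that by (intro Max_ge) auto
    also have "\<dots> < J" by (simp add: J_def)
    also have "J < 2^J" by (rule less_exp)
    also have "(2::nat)^J \<le> 2^J * (M+1)" by simp
    finally show ?thesis .
  qed
  define blkset where "blkset j = {k. int (2^j*(M+1)) \<le> \<bar>k $ i\<bar> \<and> \<bar>k $ i\<bar> < 2 * int (2^j*(M+1))}" for j
  have cover: "\<theta> k \<le> (\<Sum>j<J. if k \<in> blkset j then \<theta> k else 0)" if kH: "k \<in> H" for k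
  proof -
    have m1: "M + 1 \<le> nat \<bar>k $ i\<bar>" using H(2)[OF kH] by linarith
    obtain j where j: "j < J" "2^j*(M+1) \<le> nat \<bar>k $ i\<bar>" "nat \<bar>k $ i\<bar> < 2 * (2^j*(M+1))"
      using exists_block[OF m1 Jb[OF kH]] by blast
    have "k \<in> blkset j" unfolding blkset_def using j by (auto simp: le_nat_iff nat_less_iff)
    then have "\<theta> k = (if k \<in> blkset j then \<theta> k else 0)" by simp
    also have "\<dots> \<le> (\<Sum>j<J. if k \<in> blkset j then \<theta> k else 0)"
      by (rule member_le_sum[of j "{..<J}" "\<lambda>j. if k \<in> blkset j then \<theta> k else 0"]) (use j nonneg in auto)
    finally show ?thesis .
  qed
  have "sum \<theta> H \<le> (\<Sum>k\<in>H. \<Sum>j<J. if k \<in> blkset j then \<theta> k else 0)"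
    by (rule sum_mono) (rule cover)
  also have "\<dots> = (\<Sum>j<J. \<Sum>k\<in>H. if k \<in> blkset j then \<theta> k else 0)"
    by (rule sum.swap)
  also have "\<dots> = (\<Sum>j<J. sum \<theta> (H \<inter> blkset j))"
    using H(1) by (simp add: sum.inter_restrict)
  also have "\<dots> \<le> (\<Sum>j<J. c * (1 / (3 * real (2^j*(M+1)))) powr (2 * s))"
  proof (rule sum_mono)
    fix j assume "j \<in> {..<J}"
    show "sum \<theta> (H \<inter> blkset j) \<le> c * (1 / (3 * real (2^j*(M+1)))) powr (2 * s)"
    proof (rule blk)
      show "1 \<le> 2 ^ j * (M + 1)" by (simp add: Suc_le_eq)
    qed (use H(1) in \<open>auto simp: blkset_def\<close>)
  qed
  also have "\<dots> = c * 3 powr (- 2 * s) * (real M + 1) powr (- 2 * s) * (\<Sum>j<J. q^j)"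
    unfolding blk_val by (simp add: q_def sum_distrib_left mult_ac)
  also have "\<dots> \<le> c * 3 powr (- 2 * s) * (real M + 1) powr (- 2 * s) * (1 / (1 - q))"
  proof (rule mult_left_mono)
    have "(\<Sum>j<J. q^j) = (1 - q^J) / (1 - q)" using q by (simp add: sum_gp_strict)
    also have "\<dots> \<le> 1 / (1 - q)" using q by (intro divide_right_mono) auto
    finally show "(\<Sum>j<J. q^j) \<le> 1 / (1 - q)" .
    show "0 \<le> c * 3 powr (- 2 * s) * (real M + 1) powr (- 2 * s)" using c by simp
  qed
  finally show ?thesis by (simp add: q_def)
qed
theorem propositionE2:
  fixes f :: "real ^ 'n \<Rightarrow> real" and s R :: real and M :: nat
  assumes "0 < s" "s < 1" "0 < R"
    and holder: "\<forall>x\<in>cbox (0::real^'n) One. \<forall>y\<in>cbox (0::real^'n) One. x \<noteq> y \<longrightarrow>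
                  \<bar>f x - f y\<bar> / norm (x - y) powr s \<le> R"
    and periodic: "\<forall>x\<in>cbox (0::real^'n) One. \<forall>i. x $ i \<in> {0, 1} \<longrightarrow>
                  f x = f (\<chi> j. if j = i then 1 - x $ i else x $ j)"
  shows "(\<lambda>k. (cmod (fourier_coeff f k))\<^sup>2) summable_on {k :: int ^ 'n. \<exists>i. \<bar>k $ i\<bar> > int M}
    \<and> (\<Sum>\<^sub>\<infinity>k\<in>{k :: int ^ 'n. \<exists>i. \<bar>k $ i\<bar> > int M}. (cmod (fourier_coeff f k))\<^sup>2)
        \<le> C_const s * real CARD('n) * R\<^sup>2 * (real M + 1) powr (- 2 * s)"
proof -
  let ?A = "{k :: int ^ 'n. \<exists>i. \<bar>k $ i\<bar> > int M}"
  define \<theta> where "\<theta> = (\<lambda>k :: int ^ 'n. (cmod (fourier_coeff f k))\<^sup>2)"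
  have s0: "0 < s" and R0: "0 < R" using assms by auto
  have nonneg: "\<And>k. 0 \<le> \<theta> k" by (simp add: \<theta>_def)
  have holdR: "\<bar>f x - f y\<bar> \<le> R * norm (x - y) powr s"
    if x: "x \<in> cbox 0 One" and y: "y \<in> cbox 0 One" for x y
  proof (cases "x = y")
    case True then show ?thesis by simp
  next
    case False
    then have np: "0 < norm (x - y) powr s" by simp
    have "\<bar>f x - f y\<bar> / norm (x - y) powr s \<le> R" using holder x y False by blast
    then show ?thesis using np by (simp add: pos_divide_le_eq)
  qed
  have perF: "f (upd x i 0) = f (upd x i 1)" if x: "x \<in> cbox 0 One" for x i
  proof -
    have y: "upd x i 0 \<in> cbox 0 One" by (rule upd_in_Q[OF x]) auto
    have "f (upd x i 0) = f (\<chi> j. if j = i then 1 - (upd x i 0) $ i else (upd x i 0) $ j)"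
      using periodic y by auto
    also have "(\<chi> j. if j = i then 1 - (upd x i 0) $ i else (upd x i 0) $ j) = upd x i 1"
      by (simp add: vec_eq_iff)
    finally show ?thesis .
  qed
  define K where "K = (2/3 * R\<^sup>2) * 3 powr (- 2 * s) * (real M + 1) powr (- 2 * s) / (1 - 2 powr (- 2 * s))"
  have coord: "sum \<theta> H \<le> K" if H: "finite H" "\<And>k. k \<in> H \<Longrightarrow> int M < \<bar>k $ i\<bar>" for H :: "(int ^ 'n) set" and i :: 'n
    unfolding K_def
  proof (rule coord_sum_bound[OF nonneg s0 _ _ H])
    show "0 \<le> 2/3 * R\<^sup>2" by simp
    fix N :: nat and G :: "(int ^ 'n) set"
    assume a1: "1 \<le> N" and a2: "finite G" and a3: "\<And>k. k \<in> G \<Longrightarrow> int N \<le> \<bar>k $ i\<bar> \<and> \<bar>k $ i\<bar> < 2 * int N"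
    have bl: "(\<Sum>k\<in>G. (cmod (fourier_coeff f k))\<^sup>2) \<le> 2/3 * R\<^sup>2 * (1 / (3 * real N)) powr (2 * s)"
      using block[of s R f N G i] s0 R0 holdR perF a1 a2 a3 by blast
    then show "sum \<theta> G \<le> 2/3 * R\<^sup>2 * (1 / (3 * real N)) powr (2 * s)"
      unfolding \<theta>_def .
  qed
  have fin: "sum \<theta> F \<le> real CARD('n) * K" if F: "finite F" "F \<subseteq> ?A" for F
  proof -
    have "sum \<theta> F \<le> (\<Sum>k\<in>F. \<Sum>i\<in>UNIV. if int M < \<bar>k $ i\<bar> then \<theta> k else 0)"
    proof (rule sum_mono)
      fix k assume "k \<in> F"
      then obtain i where i: "int M < \<bar>k $ i\<bar>" using F by auto
      have "\<theta> k = (if int M < \<bar>k $ i\<bar> then \<theta> k else 0)" using i by simp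
      also have "\<dots> \<le> (\<Sum>i\<in>UNIV. if int M < \<bar>k $ i\<bar> then \<theta> k else 0)"
        by (rule member_le_sum) (use nonneg in auto)
      finally show "\<theta> k \<le> (\<Sum>i\<in>UNIV. if int M < \<bar>k $ i\<bar> then \<theta> k else 0)" .
    qed
    also have "\<dots> = (\<Sum>i\<in>UNIV. \<Sum>k\<in>F. if int M < \<bar>k $ i\<bar> then \<theta> k else 0)"
      by (rule sum.swap)
    also have "\<dots> = (\<Sum>i\<in>UNIV. sum \<theta> {k\<in>F. int M < \<bar>k $ i\<bar>})"
      using F(1) by (simp add: sum.inter_filter)
    also have "\<dots> \<le> (\<Sum>i\<in>(UNIV::'n set). K)"
      by (rule sum_mono) (rule coord, use F(1) in auto)
    also have "\<dots> = real CARD('n) * K" by simp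
    finally show ?thesis .
  qed
  have K_le: "K \<le> C_const s * R\<^sup>2 * (real M + 1) powr (- 2 * s)"
  proof -
    define q where "q = (2::real) powr (- 2 * s)"
    have q: "q < 1" using s0 by (auto simp: q_def powr_less_one)
    define Z where "Z = R\<^sup>2 * (real M + 1) powr (- 2 * s) / (1 - q)"
    have Z0: "0 \<le> Z" using q by (simp add: Z_def)
    have a: "3 powr (- 2 * s) \<le> 3 powr (- s)" by (rule powr_mono) (use s0 in auto)
    have b: "1 \<le> 2 powr (2 * s)" by (rule ge_one_powr_ge_zero) (use s0 in auto)
    have "2/3 * 3 powr (- 2 * s) \<le> 3 powr (- 2 * s)" by simp
    also note a
    also have "3 powr (- s) = 1 * 3 powr (- s)" by simp
    also have "\<dots> \<le> 2 powr (2 * s) * 3 powr (- s)" by (rule mult_right_mono[OF b]) simp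
    finally have c: "2/3 * 3 powr (- 2 * s) \<le> 2 powr (2 * s) * 3 powr (- s)" .
    have "K = (2/3 * 3 powr (- 2 * s)) * Z" by (simp add: K_def Z_def q_def)
    also have "\<dots> \<le> (2 powr (2 * s) * 3 powr (- s)) * Z" by (rule mult_right_mono[OF c Z0])
    also have "\<dots> = C_const s * R\<^sup>2 * (real M + 1) powr (- 2 * s)" by (simp add: C_const_def Z_def q_def)
    finally show ?thesis .
  qed
  have summ: "\<theta> summable_on ?A"
  proof (rule nonneg_bdd_above_summable_on)
    show "\<And>x. x \<in> ?A \<Longrightarrow> 0 \<le> \<theta> x" using nonneg by auto
    show "bdd_above (sum \<theta> ` {F. F \<subseteq> ?A \<and> finite F})"
      by (rule bdd_aboveI2[where M = "real CARD('n) * K"]) (use fin in auto)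
  qed
  have "infsum \<theta> ?A \<le> real CARD('n) * K"
    by (rule infsum_le_finite_sums[OF summ]) (rule fin)
  also have "\<dots> \<le> real CARD('n) * (C_const s * R\<^sup>2 * (real M + 1) powr (- 2 * s))"
    by (rule mult_left_mono[OF K_le]) simp
  also have "\<dots> = C_const s * real CARD('n) * R\<^sup>2 * (real M + 1) powr (- 2 * s)" by (simp add: mult_ac)
  finally show ?thesis using summ unfolding \<theta>_def by simp
qed

end
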